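(* Let $m\ge2$, $n=2m+1$, $A_1=E_1+E_{m+1}$, $A_i=E_i+E_{m+i}+E_{i-1,n}+E_{m+i-1,n}$ for $i=2,\dots,m-1$, $A_m=E_m-E_{2m}+E_{m-1,n}+E_{2m-1,n}$, $B=I_{m+1}\oplus0_m$, $c=e_m\in\mathbb R^m$. Let $(D)$ be $\inf\{B\bullet Y:A_i\bullet Y=c_i\ \forall i,\ Y\succeq0\}$ and $(HD)$ the system $A_i\bullet Y=0\ (i=1,\dots,m)$, $B\bullet Y=0$, $Y\succeq0$. Then $d(D)=m-1$ and $d(HD)=m$.
   Context: $E_{ij}\in\mathcal S^n$ has only nonzero entries $1$ in positions $(i,j),(j,i)$; $E_i:=E_{ii}$; $S\bullet T=\operatorname{trace}(ST)$. For a closed convex cone $K$, $K^*=\{y:\langle y,x\rangle\ge0\ \forall x\in K\}$; a face of $K$ is a convex $F\subseteq K$ with $x,y\in K,\frac12(x+y)\in F\Rightarrow x,y\in F$. For an affine subspace $H$ with $H\cap K\ne\emptyset$, $H^\perp=\{y:\langle y,x\rangle=0\ \forall x\in H\}$, the minimal cone of $H\cap K$ is the smallest face of $K$ containing it, and the singularity degree $d(H\cap K)$ is the smallest $k$ such that there exist $y_1,\dots,y_k$ with $y_i\in F_{i-1}^*\cap H^\perp$, where $F_0=K$, $F_i=F_{i-1}\cap y_i^\perp$, and $F_k$ equals the minimal cone. $d(D)$ and $d(HD)$ denote the singularity degrees of the feasible sets of $(D)$ and $(HD)$ (intersections of the corresponding affine/linear subspaces of $\mathcal S^n$ with $\mathcal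 S^n_+$). *)

theory Defs
  imports Complex_Main
begin

text \<open>Matrices are functions nat => nat => real, indexed 1-based as in the paper;
  an element of S^n is a symmetric matrix vanishing outside {1..n} x {1..n}.\<close>

type_synonym mat = "nat \<Rightarrow> nat \<Rightarrow> real"

definition symn :: "nat \<Rightarrow> mat set" where
  "symn n = {X. (\<forall>i j. X i j = X j i) \<and> (\<forall>i j. i \<notin> {1..n} \<or> j \<notin> {1..n} \<longrightarrow> X i j = 0)}"

definition psd :: "nat \<Rightarrow> mat set" where
  "psd n = {X \<in> symn n. \<forall>v :: nat \<Rightarrow> real. (\<Sum>i\<in>{1..n}. \<Sum>j\<in>{1..n}. v i * X i j * v j) \<ge> 0}"

definition mdot :: "nat \<Rightarrow> mat \<Rightarrow> mat \<Rightarrow> real" where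
  "mdot n S T = (\<Sum>i\<in>{1..n}. \<Sum>j\<in>{1..n}. S i j * T j i)"

definition Emat :: "nat \<Rightarrow> nat \<Rightarrow> mat" where
  "Emat i j = (\<lambda>a b. if (a = i \<and> b = j) \<or> (a = j \<and> b = i) then 1 else 0)"

definition dual_cone :: "nat \<Rightarrow> mat set \<Rightarrow> mat set" where
  "dual_cone n K = {Y \<in> symn n. \<forall>X\<in>K. mdot n Y X \<ge> 0}"

definition orth :: "nat \<Rightarrow> mat set \<Rightarrow> mat set" where
  "orth n H = {Y \<in> symn n. \<forall>X\<in>H. mdot n Y X = 0}"

definition mconvex :: "mat set \<Rightarrow> bool" where
  "mconvex F \<longleftrightarrow> (\<forall>X\<in>F. \<forall>Y\<in>F. \<forall>t::real. 0 \<le> t \<and> t \<le> 1 \<longrightarrow>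
      (\<lambda>a b. t * X a b + (1 - t) * Y a b) \<in> F)"

definition is_face :: "mat set \<Rightarrow> mat set \<Rightarrow> bool" where
  "is_face F K \<longleftrightarrow> F \<subseteq> K \<and> mconvex F \<and>
     (\<forall>X\<in>K. \<forall>Y\<in>K. (\<lambda>a b. (1/2) * (X a b + Y a b)) \<in> F \<longrightarrow> X \<in> F \<and> Y \<in> F)"

definition minimal_cone :: "mat set \<Rightarrow> mat set \<Rightarrow> mat set" where
  "minimal_cone H K = \<Inter>{F. is_face F K \<and> H \<inter> K \<subseteq> F}"

fun fr_faces :: "nat \<Rightarrow> mat set \<Rightarrow> (nat \<Rightarrow> mat) \<Rightarrow> nat \<Rightarrow> mat set" where
  "fr_faces n K y 0 = K"
| "fr_faces n K y (Suc i) = fr_faces n K y i \<inter> {X. mdot n (y (Suc i)) X = 0}"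

definition fr_sequence :: "nat \<Rightarrow> mat set \<Rightarrow> mat set \<Rightarrow> nat \<Rightarrow> bool" where
  "fr_sequence n H K k \<longleftrightarrow> (\<exists>y :: nat \<Rightarrow> mat.
      (\<forall>i\<in>{1..k}. y i \<in> dual_cone n (fr_faces n K y (i - 1)) \<inter> orth n H)
      \<and> fr_faces n K y k = minimal_cone H K)"

definition sing_deg :: "nat \<Rightarrow> mat set \<Rightarrow> mat set \<Rightarrow> nat" where
  "sing_deg n H K = (LEAST k. fr_sequence n H K k)"

definition Amat :: "nat \<Rightarrow> nat \<Rightarrow> mat" where
  "Amat m i = (let n = 2*m+1 in
     if i = 1 then (\<lambda>a b. Emat 1 1 a b + Emat (m+1) (m+1) a b)
     else if i = m then (\<lambda>a b. Emat m m a b - Emat (2*m) (2*m) a b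
                                + Emat (m-1) n a b + Emat (2*m-1) n a b)
     else (\<lambda>a b. Emat i i a b + Emat (m+i) (m+i) a b + Emat (i-1) n a b + Emat (m+i-1) n a b))"

definition Bmat :: "nat \<Rightarrow> mat" where
  "Bmat m = (\<lambda>a b. if a = b \<and> 1 \<le> a \<and> a \<le> m+1 then 1 else 0)"

definition cvec :: "nat \<Rightarrow> nat \<Rightarrow> real" where
  "cvec m i = (if i = m then 1 else 0)"

definition H_D :: "nat \<Rightarrow> mat set" where
  "H_D m = {Y \<in> symn (2*m+1). \<forall>i\<in>{1..m}. mdot (2*m+1) (Amat m i) Y = cvec m i}"

definition H_HD :: "nat \<Rightarrow> mat set" where
  "H_HD m = {Y \<in> symn (2*m+1). (\<forall>i\<in>{1..m}. mdot (2*m+1) (Amat m i) Y = 0)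
                              \<and> mdot (2*m+1) (Bmat m) Y = 0}"

end

theory Submission
  imports Defs
begin


lemma sum_delta_mult: "finite S \<Longrightarrow> (\<Sum>j\<in>S. g j * (if j = a then s else 0)) = (if a \<in> S then g a * s else (0::real))"
  by (simp add: if_distrib[where f="\<lambda>x. g _ * x"] sum.delta cong: if_cong)

lemma sum_two_mult:
  assumes "finite S" "a \<in> S" "b \<in> S" "a \<noteq> b"
  shows "(\<Sum>j\<in>S. g j * (if j = a then s else if j = b then t else 0)) = g a * s + g b * (t::real)"
proof -
  have "(\<Sum>j\<in>S. g j * (if j = a then s else if j = b then t else 0)) =
        (\<Sum>j\<in>S. g j * (if j = a then s else 0) + g j * (if j = b then t else 0))"
    by (rule sum.cong) (use assms in auto)
  also have "\<dots> = g a * s + g b * t" using assms by (simp add: sum.distrib sum_delta_mult)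
  finally show ?thesis .
qed

lemma qf_two:
  assumes "a \<in> {1..(n::nat)}" "b \<in> {1..n}" "a \<noteq> b"
  shows "(\<Sum>i\<in>{1..n}. \<Sum>j\<in>{1..n}. (if i = a then s else if i = b then t else 0) * X i j * (if j = a then s else if j = b then t else 0))
    = (s::real)*s*X a a + s*t*(X a b + X b a) + t*t*X b b"
proof -
  have "(\<Sum>i\<in>{1..n}. \<Sum>j\<in>{1..n}. (if i = a then s else if i = b then t else 0) * X i j * (if j = a then s else if j = b then t else 0))
     = (\<Sum>i\<in>{1..n}. (X i a * s + X i b * t) * (if i = a then s else if i = b then t else 0))"
  proof (rule sum.cong[OF refl])
    fix i
    have "(\<Sum>j\<in>{1..n}. (if i = a then s else if i = b then t else 0) * X i j * (if j = a then s else if j = b then t else 0))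
       = (if i = a then s else if i = b then t else 0) * (\<Sum>j\<in>{1..n}. X i j * (if j = a then s else if j = b then t else 0))"
      unfolding sum_distrib_left by (rule sum.cong) (simp_all add: mult.assoc)
    also have "\<dots> = (X i a * s + X i b * t) * (if i = a then s else if i = b then t else 0)"
      by (subst sum_two_mult) (use assms in auto)
    finally show "(\<Sum>j\<in>{1..n}. (if i = a then s else if i = b then t else 0) * X i j * (if j = a then s else if j = b then t else 0))
       = (X i a * s + X i b * t) * (if i = a then s else if i = b then t else 0)" .
  qed
  also have "\<dots> = (X a a * s + X a b * t) * s + (X b a * s + X b b * t) * t"
    by (subst sum_two_mult) (use assms in auto)
  finally show ?thesis by (simp add: algebra_simps)
qed

lemma qf_one:
  assumes "a \<in> {1..(n::nat)}"
  shows "(\<Sum>i\<in>{1..n}. \<Sum>j\<in>{1..n}. (if i = a then s else 0) * X i j * (if j = a then s else 0)) = (s::real)*s*X a a"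
proof -
  have "(\<Sum>i\<in>{1..n}. \<Sum>j\<in>{1..n}. (if i = a then s else 0) * X i j * (if j = a then s else 0))
     = (\<Sum>i\<in>{1..n}. (X i a * s) * (if i = a then s else 0))"
  proof (rule sum.cong[OF refl])
    fix i
    have "(\<Sum>j\<in>{1..n}. (if i = a then s else 0) * X i j * (if j = a then s else 0))
       = (if i = a then s else 0) * (\<Sum>j\<in>{1..n}. X i j * (if j = a then s else 0))"
      unfolding sum_distrib_left by (rule sum.cong) (simp_all add: mult.assoc)
    also have "\<dots> = (X i a * s) * (if i = a then s else 0)"
      by (subst sum_delta_mult) (use assms in auto)
    finally show "(\<Sum>j\<in>{1..n}. (if i = a then s else 0) * X i j * (if j = a then s else 0))
       = (X i a * s) * (if i = a then s else 0)" .
  qed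
  also have "\<dots> = X a a * s * s" using assms by (simp add: sum_delta_mult)
  finally show ?thesis by (simp add: algebra_simps)
qed

lemma mdot_comm: "mdot n S T = mdot n T S"
  unfolding mdot_def by (subst sum.swap) (simp add: mult.commute)

lemma mdot_add_left: "mdot n (\<lambda>a b. S a b + T a b) Y = mdot n S Y + mdot n T Y"
  unfolding mdot_def by (simp add: distrib_right sum.distrib)
lemma mdot_diff_left: "mdot n (\<lambda>a b. S a b - T a b) Y = mdot n S Y - mdot n T Y"
  unfolding mdot_def by (simp add: left_diff_distrib sum_subtractf)
lemma mdot_neg_left: "mdot n (\<lambda>a b. - S a b) Y = - mdot n S Y"
  unfolding mdot_def by (simp add: sum_negf)
lemma mdot_scale_left: "mdot n (\<lambda>a b. c * S a b) Y = c * mdot n S Y"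
  unfolding mdot_def unfolding sum_distrib_left by (rule sum.cong) (simp_all add: mult.assoc)

lemma mdot_Emat:
  assumes "a \<in> {1..n}" "b \<in> {1..n}"
  shows "mdot n (Emat a b) Y = (if a = b then Y a a else Y a b + Y b a)"
proof -
  have "mdot n (Emat a b) Y = (\<Sum>i\<in>{1..n}. \<Sum>j\<in>{1..n}. Y j i * (if j = b then (if i = a then 1 else 0) else 0)
      + Y j i * (if j = a \<and> a \<noteq> b then (if i = b then 1 else 0) else 0))"
    unfolding mdot_def Emat_def by (intro sum.cong) auto
  also have "\<dots> = (if a = b then Y a a else Y a b + Y b a)"
    using assms by (auto simp: sum.distrib if_distrib[where f="\<lambda>x. _ * x"] sum.delta cong: if_cong)
  finally show ?thesis .
qed

lemma psd_sym: "X \<in> psd n \<Longrightarrow> X i j = X j i"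
  unfolding psd_def symn_def by auto
lemma psd_out: "X \<in> psd n \<Longrightarrow> i \<notin> {1..n} \<or> j \<notin> {1..n} \<Longrightarrow> X i j = 0"
  unfolding psd_def symn_def by auto

lemma psd_diag: assumes "X \<in> psd n" shows "0 \<le> X a a"
proof (cases "a \<in> {1..n}")
  case True
  have "\<forall>v. 0 \<le> (\<Sum>i\<in>{1..n}. \<Sum>j\<in>{1..n}. v i * X i j * v j)"
    using assms unfolding psd_def by blast
  then have "0 \<le> (\<Sum>i\<in>{1..n}. \<Sum>j\<in>{1..n}. (if i = a then 1 else 0) * X i j * (if j = a then 1 else 0))"
    by (rule spec)
  then show ?thesis using qf_one[OF True, of 1 X] by simp
next
  case False then show ?thesis using psd_out[OF assms] by simp
qed

lemma qf_row_zero: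
  fixes Y :: mat
  assumes sym: "\<forall>i j. Y i j = Y j i"
    and pos: "\<forall>v. (\<forall>i. i \<notin> S \<longrightarrow> v i = 0) \<longrightarrow> 0 \<le> (\<Sum>i\<in>{1..n}. \<Sum>j\<in>{1..n}. v i * Y i j * v j)"
    and S: "S \<subseteq> {1..n}" and a: "a \<in> S" and b: "b \<in> S" and z: "Y a a = 0"
  shows "Y a b = (0::real)"
proof (cases "a = b")
  case True then show ?thesis using z by simp
next
  case False
  have key: "0 \<le> 2 * s * Y a b + Y b b" for s
  proof -
    have "0 \<le> (\<Sum>i\<in>{1..n}. \<Sum>j\<in>{1..n}. (if i = a then s else if i = b then 1 else 0) * Y i j * (if j = a then s else if j = b then 1 else 0))"
      using pos a b by auto
    also have "\<dots> = s*s*Y a a + s*1*(Y a b + Y b a) + 1*1*Y b b"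
      by (rule qf_two) (use S a b False in auto)
    finally show ?thesis using z sym by simp
  qed
  show ?thesis
  proof (rule ccontr)
    assume ne: "Y a b \<noteq> 0"
    have "0 \<le> 2 * (-(Y b b + 1) / (2 * Y a b)) * Y a b + Y b b" by (rule key)
    also have "2 * (-(Y b b + 1) / (2 * Y a b)) * Y a b = -(Y b b + 1)" using ne by (simp add: field_simps)
    finally show False by simp
  qed
qed

lemma psd_row_zero:
  assumes "X \<in> psd n" "X a a = 0" shows "X a b = 0" "X b a = 0"
proof -
  show "X a b = 0"
  proof (cases "a \<in> {1..n} \<and> b \<in> {1..n}")
    case True
    show ?thesis
      by (rule qf_row_zero[where S="{1..n}" and n=n]) (use assms True psd_sym in \<open>auto simp: psd_def\<close>)
  next
    case False then show ?thesis using psd_out[OF assms(1)] by auto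
  qed
  then show "X b a = 0" using psd_sym[OF assms(1)] by simp
qed

definition R1 :: "(nat \<Rightarrow> real) \<Rightarrow> mat" where "R1 v = (\<lambda>a b. v a * v b)"

lemma R1_psd: assumes "\<forall>i. i \<notin> {1..n} \<longrightarrow> v i = 0" shows "R1 v \<in> psd n"
proof -
  have "R1 v \<in> symn n" using assms unfolding symn_def R1_def by auto
  moreover have "0 \<le> (\<Sum>i\<in>{1..n}. \<Sum>j\<in>{1..n}. w i * R1 v i j * w j)" for w
  proof -
    have "(\<Sum>i\<in>{1..n}. \<Sum>j\<in>{1..n}. w i * R1 v i j * w j) = (\<Sum>i\<in>{1..n}. w i * v i) * (\<Sum>j\<in>{1..n}. w j * v j)"
      by (simp add: sum_product R1_def mult_ac)
    then show ?thesis by simp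
  qed
  ultimately show ?thesis unfolding psd_def by blast
qed

lemma mdot_R1: "mdot n y (R1 v) = (\<Sum>i\<in>{1..n}. \<Sum>j\<in>{1..n}. v i * y i j * v j)"
  unfolding mdot_def R1_def by (simp add: mult_ac)

lemma psd_lin:
  assumes "X \<in> psd n" "Y \<in> psd n" "0 \<le> c" "0 \<le> d"
  shows "(\<lambda>a b. c * X a b + d * Y a b) \<in> psd n"
proof -
  have "(\<lambda>a b. c * X a b + d * Y a b) \<in> symn n" using assms unfolding psd_def symn_def by auto
  moreover have "0 \<le> (\<Sum>i\<in>{1..n}. \<Sum>j\<in>{1..n}. v i * (c * X i j + d * Y i j) * v j)" for v
  proof -
    have "(\<Sum>i\<in>{1..n}. \<Sum>j\<in>{1..n}. v i * (c * X i j + d * Y i j) * v j)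
      = c * (\<Sum>i\<in>{1..n}. \<Sum>j\<in>{1..n}. v i * X i j * v j) + d * (\<Sum>i\<in>{1..n}. \<Sum>j\<in>{1..n}. v i * Y i j * v j)"
      by (simp add: algebra_simps sum.distrib sum_distrib_left)
    moreover have "0 \<le> (\<Sum>i\<in>{1..n}. \<Sum>j\<in>{1..n}. v i * X i j * v j)" "0 \<le> (\<Sum>i\<in>{1..n}. \<Sum>j\<in>{1..n}. v i * Y i j * v j)"
      using assms unfolding psd_def by auto
    ultimately show ?thesis using assms by simp
  qed
  ultimately show ?thesis unfolding psd_def by auto
qed

definition Gset :: "nat \<Rightarrow> nat set \<Rightarrow> mat set" where
  "Gset n Z = {X \<in> psd n. \<forall>a\<in>Z. X a a = 0}"

lemma Gset_face: "is_face (Gset n Z) (psd n)"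
  unfolding is_face_def
proof (intro conjI)
  show "Gset n Z \<subseteq> psd n" unfolding Gset_def by auto
  show "mconvex (Gset n Z)" unfolding mconvex_def Gset_def
    using psd_lin by auto
  show "\<forall>X\<in>psd n. \<forall>Y\<in>psd n. (\<lambda>a b. 1 / 2 * (X a b + Y a b)) \<in> Gset n Z \<longrightarrow> X \<in> Gset n Z \<and> Y \<in> Gset n Z"
  proof (intro ballI impI)
    fix X Y assume X: "X \<in> psd n" and Y: "Y \<in> psd n" and m: "(\<lambda>a b. 1 / 2 * (X a b + Y a b)) \<in> Gset n Z"
    have "\<forall>a\<in>Z. X a a = 0 \<and> Y a a = 0"
    proof
      fix a assume "a \<in> Z"
      then have "1/2 * (X a a + Y a a) = 0" using m unfolding Gset_def by auto
      moreover have "0 \<le> X a a" "0 \<le> Y a a" using psd_diag X Y by auto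
      ultimately show "X a a = 0 \<and> Y a a = 0" by (simp add: add_nonneg_eq_0_iff)
    qed
    then show "X \<in> Gset n Z \<and> Y \<in> Gset n Z" using X Y unfolding Gset_def by auto
  qed
qed


lemma mdot_Amat:
  assumes m: "2 \<le> m" and j: "1 \<le> j" "j \<le> m"
  shows "mdot (2*m+1) (Amat m j) Y =
    (if j = 1 then Y 1 1 + Y (m+1) (m+1)
     else if j = m then Y m m - Y (2*m) (2*m) + (Y (m-1) (2*m+1) + Y (2*m+1) (m-1)) + (Y (2*m-1) (2*m+1) + Y (2*m+1) (2*m-1))
     else Y j j + Y (m+j) (m+j) + (Y (j-1) (2*m+1) + Y (2*m+1) (j-1)) + (Y (m+j-1) (2*m+1) + Y (2*m+1) (m+j-1)))"
proof -
  let ?n = "2*m+1"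
  have E: "\<And>a b. a \<in> {1..?n} \<Longrightarrow> b \<in> {1..?n} \<Longrightarrow> mdot ?n (Emat a b) Y = (if a = b then Y a a else Y a b + Y b a)"
    by (rule mdot_Emat)
  consider "j = 1" | "j = m" | "j \<noteq> 1 \<and> j \<noteq> m" by blast
  then show ?thesis
  proof cases
    case 1
    have "mdot ?n (Amat m j) Y = mdot ?n (Emat 1 1) Y + mdot ?n (Emat (m+1) (m+1)) Y"
      using 1 by (simp add: Amat_def mdot_add_left)
    also have "\<dots> = Y 1 1 + Y (m+1) (m+1)" using m by (subst (1 2) E) auto
    finally show ?thesis using 1 by simp
  next
    case 2
    have "mdot ?n (Amat m j) Y = mdot ?n (Emat m m) Y - mdot ?n (Emat (2*m) (2*m)) Y
        + mdot ?n (Emat (m-1) ?n) Y + mdot ?n (Emat (2*m-1) ?n) Y"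
      using 2 m by (simp add: Amat_def Let_def mdot_add_left mdot_diff_left)
    also have "\<dots> = Y m m - Y (2*m) (2*m) + (Y (m-1) ?n + Y ?n (m-1)) + (Y (2*m-1) ?n + Y ?n (2*m-1))"
      using m by (subst (1 2 3 4) E) auto
    finally show ?thesis using 2 m by simp
  next
    case 3
    have "mdot ?n (Amat m j) Y = mdot ?n (Emat j j) Y + mdot ?n (Emat (m+j) (m+j)) Y
        + mdot ?n (Emat (j-1) ?n) Y + mdot ?n (Emat (m+j-1) ?n) Y"
      using 3 m by (simp add: Amat_def Let_def mdot_add_left mdot_diff_left)
    also have "\<dots> = Y j j + Y (m+j) (m+j) + (Y (j-1) ?n + Y ?n (j-1)) + (Y (m+j-1) ?n + Y ?n (m+j-1))"
      using m j 3 by (subst (1 2 3 4) E) auto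
    finally show ?thesis using 3 m by simp
  qed
qed



lemma mdot_Bmat:
  "mdot (2*m+1) (Bmat m) Y = (\<Sum>a\<in>{1..m+1}. Y a a)"
proof -
  have "mdot (2*m+1) (Bmat m) Y = (\<Sum>i\<in>{1..2*m+1}. if i \<le> m+1 then Y i i else 0)"
    unfolding mdot_def Bmat_def
    by (intro sum.cong refl) (auto simp: if_distrib[where f="\<lambda>x. x * _"] sum.delta cong: if_cong)
  also have "\<dots> = (\<Sum>i\<in>{1..2*m+1} \<inter> {i. i \<le> m+1}. Y i i)"
    by (simp add: sum.inter_restrict)
  also have "{1..2*m+1} \<inter> {i. i \<le> m+1} = {1..m+1}" by auto
  finally show ?thesis .
qed

definition lin3 :: "real \<Rightarrow> nat \<Rightarrow> nat \<Rightarrow> real \<Rightarrow> nat \<Rightarrow> nat \<Rightarrow> real \<Rightarrow> nat \<Rightarrow> nat \<Rightarrow> mat" where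
  "lin3 c1 a1 b1 c2 a2 b2 c3 a3 b3 = (\<lambda>p q. c1 * Emat a1 b1 p q + c2 * Emat a2 b2 p q + c3 * Emat a3 b3 p q)"

lemma mdot_lin3:
  assumes "a1 \<in> {1..n}" "b1 \<in> {1..n}" "a2 \<in> {1..n}" "b2 \<in> {1..n}" "a3 \<in> {1..n}" "b3 \<in> {1..n}"
  shows "mdot n y (lin3 c1 a1 b1 c2 a2 b2 c3 a3 b3) =
    c1 * (if a1 = b1 then y a1 a1 else y a1 b1 + y b1 a1) +
    c2 * (if a2 = b2 then y a2 a2 else y a2 b2 + y b2 a2) +
    c3 * (if a3 = b3 then y a3 a3 else y a3 b3 + y b3 a3)"
proof -
  have "mdot n y (lin3 c1 a1 b1 c2 a2 b2 c3 a3 b3) = mdot n (lin3 c1 a1 b1 c2 a2 b2 c3 a3 b3) y"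
    by (rule mdot_comm)
  also have "\<dots> = c1 * mdot n (Emat a1 b1) y + c2 * mdot n (Emat a2 b2) y + c3 * mdot n (Emat a3 b3) y"
    unfolding lin3_def by (simp add: mdot_add_left mdot_scale_left)
  also have "\<dots> = c1 * (if a1 = b1 then y a1 a1 else y a1 b1 + y b1 a1) +
    c2 * (if a2 = b2 then y a2 a2 else y a2 b2 + y b2 a2) +
    c3 * (if a3 = b3 then y a3 a3 else y a3 b3 + y b3 a3)"
    using assms by (simp only: mdot_Emat)
  finally show ?thesis .
qed

lemma Emat_sym: "Emat a b p q = Emat a b q p"
  unfolding Emat_def by auto
lemma Emat_out: "a \<in> {1..n} \<Longrightarrow> b \<in> {1..n} \<Longrightarrow> p \<notin> {1..n} \<or> q \<notin> {1..n} \<Longrightarrow> Emat a b p q = 0"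
  unfolding Emat_def by auto

lemma lin3_symn:
  assumes "a1 \<in> {1..n}" "b1 \<in> {1..n}" "a2 \<in> {1..n}" "b2 \<in> {1..n}" "a3 \<in> {1..n}" "b3 \<in> {1..n}"
  shows "lin3 c1 a1 b1 c2 a2 b2 c3 a3 b3 \<in> symn n"
  unfolding symn_def lin3_def
proof (intro CollectI conjI allI impI)
  fix i j show "c1 * Emat a1 b1 i j + c2 * Emat a2 b2 i j + c3 * Emat a3 b3 i j =
       c1 * Emat a1 b1 j i + c2 * Emat a2 b2 j i + c3 * Emat a3 b3 j i"
    by (simp only: Emat_sym[of _ _ i j])
next
  fix i j assume "i \<notin> {1..n} \<or> j \<notin> {1..n}"
  then show "c1 * Emat a1 b1 i j + c2 * Emat a2 b2 i j + c3 * Emat a3 b3 i j = 0"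
  proof -
    have "Emat a1 b1 i j = 0" "Emat a2 b2 i j = 0" "Emat a3 b3 i j = 0"
      using assms \<open>i \<notin> {1..n} \<or> j \<notin> {1..n}\<close> by (blast intro: Emat_out)+
    then show ?thesis by simp
  qed
qed


lemma Amat_diag:
  assumes m: "2 \<le> m" and j: "1 \<le> j" "j \<le> m"
  shows "Amat m j p p = (if p = j then 1 else if p = m+j then (if j = m then -1 else 1) else 0)"
proof -
  consider "j = 1" | "j = m" | "j \<noteq> 1 \<and> j \<noteq> m" by blast
  then show ?thesis
  proof cases
    case 1 then show ?thesis using m by (simp add: Amat_def Emat_def)
  next
    case 2 then show ?thesis using m by (auto simp add: Amat_def Emat_def Let_def)
  next
    case 3 then show ?thesis using m j by (auto simp add: Amat_def Emat_def Let_def)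
  qed
qed

lemma Amat_offn:
  assumes m: "2 \<le> m" and j: "1 \<le> j" "j \<le> m" and a: "a \<noteq> 2*m+1"
  shows "Amat m j a (2*m+1) = (if 2 \<le> j \<and> (a = j-1 \<or> a = m+j-1) then 1 else 0)"
    "Amat m j (2*m+1) a = (if 2 \<le> j \<and> (a = j-1 \<or> a = m+j-1) then 1 else 0)"
proof -
  consider "j = 1" | "j = m" | "j \<noteq> 1 \<and> j \<noteq> m" by blast
  then show "Amat m j a (2*m+1) = (if 2 \<le> j \<and> (a = j-1 \<or> a = m+j-1) then 1 else 0)"
  proof cases
    case 1 then show ?thesis using m a by (simp add: Amat_def Emat_def)
  next
    case 2 then show ?thesis using m a by (auto simp add: Amat_def Emat_def Let_def)
  next
    case 3 then show ?thesis using m j a by (auto simp add: Amat_def Emat_def Let_def)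
  qed
  moreover have "Amat m j (2*m+1) a = Amat m j a (2*m+1)"
    unfolding Amat_def Let_def by (simp add: Emat_sym[of _ _ a])
  ultimately show "Amat m j (2*m+1) a = (if 2 \<le> j \<and> (a = j-1 \<or> a = m+j-1) then 1 else 0)" by simp
qed


lemma Amat_offn_Suc:
  assumes m: "2 \<le> m" and j: "1 \<le> j" "j \<le> m" and a: "a \<noteq> Suc (2*m)"
  shows "Amat m j a (Suc (2*m)) = (if 2 \<le> j \<and> (a = j-1 \<or> a = m+j-1) then 1 else 0)"
    "Amat m j (Suc (2*m)) a = (if 2 \<le> j \<and> (a = j-1 \<or> a = m+j-1) then 1 else 0)"
  using Amat_offn[OF assms(1-3), of a] a by simp_all

lemma KD0:
  assumes m: "2 \<le> m" 
  shows "lin3 1 m m 0 m m 0 m m \<in> H_D m"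
  unfolding H_D_def
proof (intro CollectI conjI ballI)
  show "lin3 1 m m 0 m m 0 m m \<in> symn (2*m+1)"
    by (rule lin3_symn) (use assms in auto)
  fix j assume j: "j \<in> {1..m}"
  show "mdot (2 * m + 1) (Amat m j) (lin3 1 m m 0 m m 0 m m) = cvec m j"
    apply (subst mdot_lin3)
    using assms j by (auto simp add: Amat_diag Amat_offn_Suc cvec_def)
qed

lemma KD1:
  assumes m: "2 \<le> m" 
  shows "lin3 1 m m 1 (2*m+1) (2*m+1) 0 (2*m+1) (2*m+1) \<in> H_D m"
  unfolding H_D_def
proof (intro CollectI conjI ballI)
  show "lin3 1 m m 1 (2*m+1) (2*m+1) 0 (2*m+1) (2*m+1) \<in> symn (2*m+1)"
    by (rule lin3_symn) (use assms in auto)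
  fix j assume j: "j \<in> {1..m}"
  show "mdot (2 * m + 1) (Amat m j) (lin3 1 m m 1 (2*m+1) (2*m+1) 0 (2*m+1) (2*m+1)) = cvec m j"
    apply (subst mdot_lin3)
    using assms j by (auto simp add: Amat_diag Amat_offn_Suc cvec_def)
qed

lemma KD2:
  assumes m: "2 \<le> m" and i: "2 \<le> i" "i \<le> m"
  shows "lin3 1 m m 1 i i (-1/2) (i-1) (2*m+1) \<in> H_D m"
  unfolding H_D_def
proof (intro CollectI conjI ballI)
  show "lin3 1 m m 1 i i (-1/2) (i-1) (2*m+1) \<in> symn (2*m+1)"
    by (rule lin3_symn) (use assms in auto)
  fix j assume j: "j \<in> {1..m}"
  show "mdot (2 * m + 1) (Amat m j) (lin3 1 m m 1 i i (-1/2) (i-1) (2*m+1)) = cvec m j"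
    apply (subst mdot_lin3)
    using assms j by (auto simp add: Amat_diag Amat_offn_Suc cvec_def)
qed

lemma KD3:
  assumes m: "2 \<le> m" and i: "2 \<le> i" "i \<le> m - 1"
  shows "lin3 1 m m 1 (m+i) (m+i) (-1/2) (m+i-1) (2*m+1) \<in> H_D m"
  unfolding H_D_def
proof (intro CollectI conjI ballI)
  show "lin3 1 m m 1 (m+i) (m+i) (-1/2) (m+i-1) (2*m+1) \<in> symn (2*m+1)"
    by (rule lin3_symn) (use assms in auto)
  fix j assume j: "j \<in> {1..m}"
  show "mdot (2 * m + 1) (Amat m j) (lin3 1 m m 1 (m+i) (m+i) (-1/2) (m+i-1) (2*m+1)) = cvec m j"
    apply (subst mdot_lin3)
    using assms j by (auto simp add: Amat_diag Amat_offn_Suc cvec_def)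
qed

lemma KD4:
  assumes m: "2 \<le> m" 
  shows "lin3 1 m m 1 (2*m) (2*m) (1/2) (2*m-1) (2*m+1) \<in> H_D m"
  unfolding H_D_def
proof (intro CollectI conjI ballI)
  show "lin3 1 m m 1 (2*m) (2*m) (1/2) (2*m-1) (2*m+1) \<in> symn (2*m+1)"
    by (rule lin3_symn) (use assms in auto)
  fix j assume j: "j \<in> {1..m}"
  show "mdot (2 * m + 1) (Amat m j) (lin3 1 m m 1 (2*m) (2*m) (1/2) (2*m-1) (2*m+1)) = cvec m j"
    apply (subst mdot_lin3)
    using assms j by (auto simp add: Amat_diag Amat_offn_Suc cvec_def)
qed

lemma KH1:
  assumes m: "2 \<le> m" 
  shows "lin3 0 m m 1 (2*m+1) (2*m+1) 0 (2*m+1) (2*m+1) \<in> H_HD m"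
  unfolding H_HD_def
proof (intro CollectI conjI ballI)
  show "lin3 0 m m 1 (2*m+1) (2*m+1) 0 (2*m+1) (2*m+1) \<in> symn (2*m+1)"
    by (rule lin3_symn) (use assms in auto)
  show "mdot (2*m+1) (Bmat m) (lin3 0 m m 1 (2*m+1) (2*m+1) 0 (2*m+1) (2*m+1)) = 0"
    apply (subst mdot_lin3)
    using assms by (auto simp add: Bmat_def)
  fix j assume j: "j \<in> {1..m}"
  show "mdot (2 * m + 1) (Amat m j) (lin3 0 m m 1 (2*m+1) (2*m+1) 0 (2*m+1) (2*m+1)) = 0"
    apply (subst mdot_lin3)
    using assms j by (auto simp add: Amat_diag Amat_offn_Suc)
qed

lemma KH3:
  assumes m: "2 \<le> m" and i: "2 \<le> i" "i \<le> m - 1"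
  shows "lin3 0 m m 1 (m+i) (m+i) (-1/2) (m+i-1) (2*m+1) \<in> H_HD m"
  unfolding H_HD_def
proof (intro CollectI conjI ballI)
  show "lin3 0 m m 1 (m+i) (m+i) (-1/2) (m+i-1) (2*m+1) \<in> symn (2*m+1)"
    by (rule lin3_symn) (use assms in auto)
  show "mdot (2*m+1) (Bmat m) (lin3 0 m m 1 (m+i) (m+i) (-1/2) (m+i-1) (2*m+1)) = 0"
    apply (subst mdot_lin3)
    using assms by (auto simp add: Bmat_def)
  fix j assume j: "j \<in> {1..m}"
  show "mdot (2 * m + 1) (Amat m j) (lin3 0 m m 1 (m+i) (m+i) (-1/2) (m+i-1) (2*m+1)) = 0"
    apply (subst mdot_lin3)
    using assms j by (auto simp add: Amat_diag Amat_offn_Suc)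
qed

lemma KH4:
  assumes m: "2 \<le> m" 
  shows "lin3 0 m m 1 (2*m) (2*m) (1/2) (2*m-1) (2*m+1) \<in> H_HD m"
  unfolding H_HD_def
proof (intro CollectI conjI ballI)
  show "lin3 0 m m 1 (2*m) (2*m) (1/2) (2*m-1) (2*m+1) \<in> symn (2*m+1)"
    by (rule lin3_symn) (use assms in auto)
  show "mdot (2*m+1) (Bmat m) (lin3 0 m m 1 (2*m) (2*m) (1/2) (2*m-1) (2*m+1)) = 0"
    apply (subst mdot_lin3)
    using assms by (auto simp add: Bmat_def)
  fix j assume j: "j \<in> {1..m}"
  show "mdot (2 * m + 1) (Amat m j) (lin3 0 m m 1 (2*m) (2*m) (1/2) (2*m-1) (2*m+1)) = 0"
    apply (subst mdot_lin3)
    using assms j by (auto simp add: Amat_diag Amat_offn_Suc)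
qed


lemma orth_sym: "y \<in> orth n H \<Longrightarrow> y i j = y j i"
  unfolding orth_def symn_def by auto

lemma aux1: "E = 0 \<Longrightarrow> E = 1*a + 1*b + (-1/2)*(c+d) \<Longrightarrow> a = 0 \<Longrightarrow> d = c \<Longrightarrow> b = (c::real)" by simp
lemma aux2: "E = 0 \<Longrightarrow> E = 0*a + 1*b + (-1/2)*(c+d) \<Longrightarrow> d = c \<Longrightarrow> b = (c::real)" by simp
lemma aux3: "E = 0 \<Longrightarrow> E = 1*a + 1*b + (1/2)*(c+d) \<Longrightarrow> a = 0 \<Longrightarrow> d = c \<Longrightarrow> b = - (c::real)" by simp
lemma aux4: "E = 0 \<Longrightarrow> E = 0*a + 1*b + (1/2)*(c+d) \<Longrightarrow> d = c \<Longrightarrow> b = - (c::real)" by simp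

lemma orthD:
  assumes m: "2 \<le> m" and y: "y \<in> orth (2*m+1) (H_D m)"
  shows "y (2*m+1) (2*m+1) = 0"
    "\<And>i. 2 \<le> i \<Longrightarrow> i \<le> m \<Longrightarrow> y i i = y (i-1) (2*m+1)"
    "\<And>i. 2 \<le> i \<Longrightarrow> i \<le> m - 1 \<Longrightarrow> y (m+i) (m+i) = y (m+i-1) (2*m+1)"
    "y (2*m) (2*m) = - y (2*m-1) (2*m+1)"
proof -
  have o: "\<And>X. X \<in> H_D m \<Longrightarrow> mdot (2*m+1) y X = 0" using y unfolding orth_def by auto
  have s: "\<And>i j. y i j = y j i" using y by (rule orth_sym)
  have "mdot (2*m+1) y (lin3 1 m m 0 m m 0 m m) = 0" using o KD0[OF m] by blast
  then have ymm: "y m m = 0" using m by (subst (asm) mdot_lin3) auto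
  have "mdot (2*m+1) y (lin3 1 m m 1 (2*m+1) (2*m+1) 0 (2*m+1) (2*m+1)) = 0" using o KD1[OF m] by blast
  then show "y (2*m+1) (2*m+1) = 0" using m ymm by (subst (asm) mdot_lin3) auto
  fix i assume i: "2 \<le> i" "i \<le> m"
  have "mdot (2*m+1) y (lin3 1 m m 1 i i (-1/2) (i-1) (2*m+1)) = 0" using o KD2[OF m i] by blast
  moreover have "mdot (2*m+1) y (lin3 1 m m 1 i i (-1/2) (i-1) (2*m+1)) = 1 * y m m + 1 * y i i + (-1/2) * (y (i-1) (2*m+1) + y (2*m+1) (i-1))"
    using m i by (subst mdot_lin3) auto
  ultimately show "y i i = y (i-1) (2*m+1)" using ymm s[of "2*m+1" "i-1"] by (rule aux1)
next
  have o: "\<And>X. X \<in> H_D m \<Longrightarrow> mdot (2*m+1) y X = 0" using y unfolding orth_def by auto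
  have s: "\<And>i j. y i j = y j i" using y by (rule orth_sym)
  have "mdot (2*m+1) y (lin3 1 m m 0 m m 0 m m) = 0" using o KD0[OF m] by blast
  then have ymm: "y m m = 0" using m by (subst (asm) mdot_lin3) auto
  {
  fix i assume i: "2 \<le> i" "i \<le> m - 1"
  have "mdot (2*m+1) y (lin3 1 m m 1 (m+i) (m+i) (-1/2) (m+i-1) (2*m+1)) = 0" using o KD3[OF m i] by blast
  moreover have "mdot (2*m+1) y (lin3 1 m m 1 (m+i) (m+i) (-1/2) (m+i-1) (2*m+1)) = 1 * y m m + 1 * y (m+i) (m+i) + (-1/2) * (y (m+i-1) (2*m+1) + y (2*m+1) (m+i-1))"
    using m i by (subst mdot_lin3) auto
  ultimately show "y (m+i) (m+i) = y (m+i-1) (2*m+1)" using ymm s[of "2*m+1" "m+i-1"] by (rule aux1)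
  }
  have "mdot (2*m+1) y (lin3 1 m m 1 (2*m) (2*m) (1/2) (2*m-1) (2*m+1)) = 0" using o KD4[OF m] by blast
  moreover have "mdot (2*m+1) y (lin3 1 m m 1 (2*m) (2*m) (1/2) (2*m-1) (2*m+1)) = 1 * y m m + 1 * y (2*m) (2*m) + (1/2) * (y (2*m-1) (2*m+1) + y (2*m+1) (2*m-1))"
    using m by (subst mdot_lin3) auto
  ultimately show "y (2*m) (2*m) = - y (2*m-1) (2*m+1)" using ymm s[of "2*m+1" "2*m-1"] by (rule aux3)
qed

lemma orthH:
  assumes m: "2 \<le> m" and y: "y \<in> orth (2*m+1) (H_HD m)"
  shows "y (2*m+1) (2*m+1) = 0"
    "\<And>i. 2 \<le> i \<Longrightarrow> i \<le> m - 1 \<Longrightarrow> y (m+i) (m+i) = y (m+i-1) (2*m+1)"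
    "y (2*m) (2*m) = - y (2*m-1) (2*m+1)"
proof -
  have o: "\<And>X. X \<in> H_HD m \<Longrightarrow> mdot (2*m+1) y X = 0" using y unfolding orth_def by auto
  have s: "\<And>i j. y i j = y j i" using y by (rule orth_sym)
  have "mdot (2*m+1) y (lin3 0 m m 1 (2*m+1) (2*m+1) 0 (2*m+1) (2*m+1)) = 0" using o KH1[OF m] by blast
  then show "y (2*m+1) (2*m+1) = 0" using m by (subst (asm) mdot_lin3) auto
  {
  fix i assume i: "2 \<le> i" "i \<le> m - 1"
  have "mdot (2*m+1) y (lin3 0 m m 1 (m+i) (m+i) (-1/2) (m+i-1) (2*m+1)) = 0" using o KH3[OF m i] by blast
  moreover have "mdot (2*m+1) y (lin3 0 m m 1 (m+i) (m+i) (-1/2) (m+i-1) (2*m+1)) = 0 * y m m + 1 * y (m+i) (m+i) + (-1/2) * (y (m+i-1) (2*m+1) + y (2*m+1) (m+i-1))"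
    using m i by (subst mdot_lin3) auto
  ultimately show "y (m+i) (m+i) = y (m+i-1) (2*m+1)" using s[of "2*m+1" "m+i-1"] by (rule aux2)
  }
  have "mdot (2*m+1) y (lin3 0 m m 1 (2*m) (2*m) (1/2) (2*m-1) (2*m+1)) = 0" using o KH4[OF m] by blast
  moreover have "mdot (2*m+1) y (lin3 0 m m 1 (2*m) (2*m) (1/2) (2*m-1) (2*m+1)) = 0 * y m m + 1 * y (2*m) (2*m) + (1/2) * (y (2*m-1) (2*m+1) + y (2*m+1) (2*m-1))"
    using m by (subst mdot_lin3) auto
  ultimately show "y (2*m) (2*m) = - y (2*m-1) (2*m+1)" using s[of "2*m+1" "2*m-1"] by (rule aux4)
qed


lemma lower_step:
  fixes y :: mat
  assumes y: "y \<in> symn N"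
    and pos: "\<forall>X\<in>Gset N Z. 0 \<le> mdot N y X"
    and Z1: "Z \<subseteq> Z1"
    and nN: "N \<notin> Z1" "1 \<le> N"
    and ynn: "y N N = 0"
    and diag: "\<forall>a\<in>{1..N}. a \<notin> Z1 \<longrightarrow> a \<noteq> N \<longrightarrow> (\<exists>b\<in>{1..N}. b \<notin> Z \<and> (y a a = y b N \<or> y a a = - y b N))"
  shows "\<forall>X\<in>Gset N Z1. mdot N y X = 0"
proof -
  let ?S = "{1..N} - Z"
  have sym: "\<forall>i j. y i j = y j i" using y unfolding symn_def by auto
  have posq: "\<forall>v. (\<forall>i. i \<notin> ?S \<longrightarrow> v i = 0) \<longrightarrow> 0 \<le> (\<Sum>i\<in>{1..N}. \<Sum>j\<in>{1..N}. v i * y i j * v j)"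
  proof (intro allI impI)
    fix v :: "nat \<Rightarrow> real" assume v: "\<forall>i. i \<notin> ?S \<longrightarrow> v i = 0"
    have "R1 v \<in> Gset N Z"
      unfolding Gset_def using R1_psd[of N v] v by (auto simp: R1_def)
    then have "0 \<le> mdot N y (R1 v)" using pos by blast
    then show "0 \<le> (\<Sum>i\<in>{1..N}. \<Sum>j\<in>{1..N}. v i * y i j * v j)" by (simp add: mdot_R1)
  qed
  have NS: "N \<in> ?S" using nN Z1 by auto
  have ybn: "y b N = 0" if "b \<in> ?S" for b
  proof -
    have "y N b = 0" by (rule qf_row_zero[OF sym posq _ NS that ynn]) auto
    then show ?thesis using sym by metis
  qed
  have ydiag: "y a a = 0" if aa: "a \<in> {1..N}" "a \<notin> Z1" for a
  proof (cases "a = N")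
    case True then show ?thesis using ynn by simp
  next
    case False
    then obtain b where "b \<in> {1..N}" "b \<notin> Z" "y a a = y b N \<or> y a a = - y b N" using diag aa by blast
    then show ?thesis using ybn by auto
  qed
  have yz: "y a b = 0" if "a \<in> {1..N}" "a \<notin> Z1" "b \<in> ?S" for a b
    by (rule qf_row_zero[OF sym posq]) (use that Z1 ydiag in auto)
  show ?thesis
  proof
    fix X assume X: "X \<in> Gset N Z1"
    have Xp: "X \<in> psd N" and Xd: "\<forall>a\<in>Z1. X a a = 0" using X unfolding Gset_def by auto
    have "mdot N y X = (\<Sum>i\<in>{1..N}. \<Sum>j\<in>{1..N}. 0)"
      unfolding mdot_def
    proof (intro sum.cong refl)
      fix i j assume i: "i \<in> {1..N}" and j: "j \<in> {1..N}"
      show "y i j * X j i = 0"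
      proof (cases "i \<in> Z1 \<or> j \<in> Z1")
        case True then have "X j i = 0" using psd_row_zero[OF Xp] Xd by blast
        then show ?thesis by simp
      next
        case False then have "y i j = 0" using yz[of i j] i j Z1 by auto
        then show ?thesis by simp
      qed
    qed
    then show "mdot N y X = 0" by simp
  qed
qed

lemma H_sub_faces:
  assumes "\<forall>i\<in>{1..k}. y i \<in> orth n H"
  shows "H \<inter> K \<subseteq> fr_faces n K y k"
  using assms
proof (induction k)
  case 0 then show ?case by simp
next
  case (Suc k)
  then have "H \<inter> K \<subseteq> fr_faces n K y k" by auto
  moreover have "y (Suc k) \<in> orth n H" using Suc.prems by auto
  ultimately show ?case unfolding orth_def by auto
qed

lemma minimal_cone_eq:
  assumes "is_face M K" "H \<inter> K \<subseteq> M" "\<And>F. is_face F K \<Longrightarrow> H \<inter> K \<subseteq> F \<Longrightarrow> M \<subseteq> F"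
  shows "minimal_cone H K = M"
  unfolding minimal_cone_def using assms by blast

lemma sing_deg_eq:
  assumes "fr_sequence n H K T" "\<And>k. k < T \<Longrightarrow> \<not> fr_sequence n H K k"
  shows "sing_deg n H K = T"
  unfolding sing_deg_def
  by (rule Least_equality) (use assms not_le in auto)


lemma psd_scale: "X \<in> psd n \<Longrightarrow> 0 \<le> c \<Longrightarrow> (\<lambda>a b. c * X a b) \<in> psd n"
  using psd_lin[of X n X c 0] by simp
lemma psd_add: "X \<in> psd n \<Longrightarrow> Y \<in> psd n \<Longrightarrow> (\<lambda>a b. X a b + Y a b) \<in> psd n"
  using psd_lin[of X n Y 1 1] by simp

lemma Emat_diag_psd: assumes "a \<in> {1..n}" shows "Emat a a \<in> psd n"
proof -
  have "Emat a a = R1 (\<lambda>i. if i = a then 1 else 0)"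
    unfolding Emat_def R1_def by (intro ext) auto
  moreover have "R1 (\<lambda>i. if i = a then 1 else 0) \<in> psd n" by (rule R1_psd) (use assms in auto)
  ultimately show ?thesis by simp
qed

lemma Amat_symn:
  assumes m: "2 \<le> m" and j: "1 \<le> j" "j \<le> m"
  shows "Amat m j \<in> symn (2*m+1)"
  unfolding symn_def
proof (intro CollectI conjI allI impI)
  fix p q show "Amat m j p q = Amat m j q p"
    unfolding Amat_def Let_def by (simp add: Emat_sym[of _ _ p q])
next
  fix p q assume pq: "p \<notin> {1..2*m+1} \<or> q \<notin> {1..2*m+1}"
  have E: "\<And>a b. a \<in> {1..2*m+1} \<Longrightarrow> b \<in> {1..2*m+1} \<Longrightarrow> Emat a b p q = 0"
    using pq Emat_out by blast
  consider "j = 1" | "j = m" | "j \<noteq> 1 \<and> j \<noteq> m" by blast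
  then show "Amat m j p q = 0"
  proof cases
    case 1 then show ?thesis using m by (simp add: Amat_def E)
  next
    case 2
    have "Emat (m-1) (2*m+1) p q = 0" "Emat (2*m-1) (2*m+1) p q = 0"
      "Emat m m p q = 0" "Emat (2*m) (2*m) p q = 0" by (rule E; use m in auto)+
    then show ?thesis using 2 m unfolding Amat_def Let_def by simp
  next
    case 3
    have "Emat (j-1) (2*m+1) p q = 0" "Emat (m+j-1) (2*m+1) p q = 0"
      "Emat j j p q = 0" "Emat (m+j) (m+j) p q = 0" by (rule E; use m j 3 in auto)+
    then show ?thesis using 3 m unfolding Amat_def Let_def by simp
  qed
qed

definition ZD :: "nat \<Rightarrow> nat \<Rightarrow> nat set" where
  "ZD m k = {a. (1 \<le> a \<and> a \<le> k) \<or> (m+1 \<le> a \<and> a \<le> m+k)}"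

lemma AD_on_G:
  assumes m: "2 \<le> m" and j: "1 \<le> j" "j \<le> m - 1" and X: "X \<in> Gset (2*m+1) (ZD m (j-1))"
  shows "mdot (2*m+1) (Amat m j) X = X j j + X (m+j) (m+j)"
proof -
  have Xp: "X \<in> psd (2*m+1)" and Xd: "\<forall>a\<in>ZD m (j-1). X a a = 0" using X unfolding Gset_def by auto
  have A: "mdot (2*m+1) (Amat m j) X =
    (if j = 1 then X 1 1 + X (m+1) (m+1)
     else if j = m then X m m - X (2*m) (2*m) + (X (m-1) (2*m+1) + X (2*m+1) (m-1)) + (X (2*m-1) (2*m+1) + X (2*m+1) (2*m-1))
     else X j j + X (m+j) (m+j) + (X (j-1) (2*m+1) + X (2*m+1) (j-1)) + (X (m+j-1) (2*m+1) + X (2*m+1) (m+j-1)))"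
    by (rule mdot_Amat) (use m j in auto)
  show ?thesis
  proof (cases "j = 1")
    case True then show ?thesis using A by simp
  next
    case False
    have z1: "X (j-1) (j-1) = 0" using Xd False j by (auto simp: ZD_def)
    have z2: "X (m+j-1) (m+j-1) = 0" using Xd False j by (auto simp: ZD_def)
    have "X (j-1) (2*m+1) = 0" "X (2*m+1) (j-1) = 0" using psd_row_zero[OF Xp z1] by auto
    moreover have "X (m+j-1) (2*m+1) = 0" "X (2*m+1) (m+j-1) = 0" using psd_row_zero[OF Xp z2] by auto
    moreover have "j \<noteq> m" using j m by auto
    ultimately show ?thesis using A False by simp
  qed
qed

lemma ZD_Suc: "ZD m (Suc k) = ZD m k \<union> {Suc k, m + Suc k}"
  unfolding ZD_def by auto

lemma ZD_0: "ZD m 0 = {}"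
  unfolding ZD_def by auto

lemma upperD:
  assumes m: "2 \<le> m"
  shows "k \<le> m - 1 \<Longrightarrow> fr_faces (2*m+1) (psd (2*m+1)) (Amat m) k = Gset (2*m+1) (ZD m k)"
proof (induction k)
  case 0 then show ?case by (simp add: ZD_0 Gset_def)
next
  case (Suc k)
  then have IH: "fr_faces (2*m+1) (psd (2*m+1)) (Amat m) k = Gset (2*m+1) (ZD m k)" by simp
  have "Gset (2*m+1) (ZD m k) \<inter> {X. mdot (2*m+1) (Amat m (Suc k)) X = 0} = Gset (2*m+1) (ZD m (Suc k))"
  proof (intro set_eqI iffI)
    fix X assume X: "X \<in> Gset (2*m+1) (ZD m k) \<inter> {X. mdot (2*m+1) (Amat m (Suc k)) X = 0}"
    then have XG: "X \<in> Gset (2*m+1) (ZD m k)" by auto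
    have "mdot (2*m+1) (Amat m (Suc k)) X = X (Suc k) (Suc k) + X (m + Suc k) (m + Suc k)"
      by (rule AD_on_G) (use m Suc.prems XG in auto)
    moreover have "0 \<le> X (Suc k) (Suc k)" "0 \<le> X (m + Suc k) (m + Suc k)"
      using XG psd_diag unfolding Gset_def by auto
    ultimately have "X (Suc k) (Suc k) = 0" "X (m + Suc k) (m + Suc k) = 0" using X by auto
    then show "X \<in> Gset (2*m+1) (ZD m (Suc k))" using XG unfolding Gset_def ZD_Suc by auto
  next
    fix X assume X: "X \<in> Gset (2*m+1) (ZD m (Suc k))"
    then have XG: "X \<in> Gset (2*m+1) (ZD m k)" unfolding Gset_def ZD_Suc by auto
    have "mdot (2*m+1) (Amat m (Suc k)) X = X (Suc k) (Suc k) + X (m + Suc k) (m + Suc k)"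
      by (rule AD_on_G) (use m Suc.prems XG in auto)
    moreover have "X (Suc k) (Suc k) = 0" "X (m + Suc k) (m + Suc k) = 0" using X unfolding Gset_def ZD_Suc by auto
    ultimately show "X \<in> Gset (2*m+1) (ZD m k) \<inter> {X. mdot (2*m+1) (Amat m (Suc k)) X = 0}" using XG by auto
  qed
  then show ?case using IH by simp
qed

lemma validD:
  assumes m: "2 \<le> m" and i: "i \<in> {1..m-1}"
  shows "Amat m i \<in> dual_cone (2*m+1) (fr_faces (2*m+1) (psd (2*m+1)) (Amat m) (i-1)) \<inter> orth (2*m+1) (H_D m)"
proof -
  have sy: "Amat m i \<in> symn (2*m+1)" by (rule Amat_symn) (use m i in auto)
  have F: "fr_faces (2*m+1) (psd (2*m+1)) (Amat m) (i-1) = Gset (2*m+1) (ZD m (i-1))"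
    by (rule upperD) (use m i in auto)
  have "0 \<le> mdot (2*m+1) (Amat m i) X" if X: "X \<in> Gset (2*m+1) (ZD m (i-1))" for X
  proof -
    have "mdot (2*m+1) (Amat m i) X = X i i + X (m+i) (m+i)"
      by (rule AD_on_G) (use m i X in auto)
    moreover have "0 \<le> X i i" "0 \<le> X (m+i) (m+i)" using X psd_diag unfolding Gset_def by auto
    ultimately show ?thesis by simp
  qed
  moreover have "mdot (2*m+1) (Amat m i) X = 0" if X: "X \<in> H_D m" for X
    using X i m unfolding H_D_def cvec_def by auto
  ultimately show ?thesis using sy F unfolding dual_cone_def orth_def by auto
qed


lemma X0_in_HD:
  assumes m: "2 \<le> m" and X: "X \<in> Gset (2*m+1) (ZD m (m-1))"
    and al: "al - be = 1 - X m m + X (2*m) (2*m)"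
  shows "(\<lambda>a b. X a b + (al * Emat m m a b + be * Emat (2*m) (2*m) a b)) \<in> H_D m"
proof -
  let ?X0 = "\<lambda>a b. X a b + (al * Emat m m a b + be * Emat (2*m) (2*m) a b)"
  have Xp: "X \<in> psd (2*m+1)" and Xd: "\<forall>a\<in>ZD m (m-1). X a a = 0" using X unfolding Gset_def by auto
  have Xz: "X p q = 0 \<and> X q p = 0" if "p \<in> ZD m (m-1)" for p q
  proof -
    have "X p p = 0" using Xd that by blast
    from psd_row_zero[OF Xp this] show ?thesis by blast
  qed
  have sy: "?X0 \<in> symn (2*m+1)"
  proof -
    have "Emat m m \<in> psd (2*m+1)" "Emat (2*m) (2*m) \<in> psd (2*m+1)"
      by (rule Emat_diag_psd; use m in auto)+
    then have "?X0 \<in> psd (2*m+1) \<or> True" by simp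
    show ?thesis unfolding symn_def
    proof (intro CollectI conjI allI impI)
      fix p q show "?X0 p q = ?X0 q p" using psd_sym[OF Xp, of p q] by (simp add: Emat_sym[of _ _ p q])
    next
      fix p q assume pq: "p \<notin> {1..2*m+1} \<or> q \<notin> {1..2*m+1}"
      have "Emat m m p q = 0" "Emat (2*m) (2*m) p q = 0" by (rule Emat_out; use m pq in auto)+
      moreover have "X p q = 0" using psd_out[OF Xp pq] .
      ultimately show "?X0 p q = 0" by simp
    qed
  qed
  have "mdot (2*m+1) (Amat m j) ?X0 = cvec m j" if j: "j \<in> {1..m}" for j
  proof -
    have A: "mdot (2*m+1) (Amat m j) ?X0 =
      (if j = 1 then ?X0 1 1 + ?X0 (m+1) (m+1)
       else if j = m then ?X0 m m - ?X0 (2*m) (2*m) + (?X0 (m-1) (2*m+1) + ?X0 (2*m+1) (m-1)) + (?X0 (2*m-1) (2*m+1) + ?X0 (2*m+1) (2*m-1))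
       else ?X0 j j + ?X0 (m+j) (m+j) + (?X0 (j-1) (2*m+1) + ?X0 (2*m+1) (j-1)) + (?X0 (m+j-1) (2*m+1) + ?X0 (2*m+1) (m+j-1)))"
      by (rule mdot_Amat) (use m j in auto)
    consider "j = 1" | "j = m" | "j \<noteq> 1 \<and> j \<noteq> m" by blast
    then show ?thesis
    proof cases
      case 1
      have "1 \<in> ZD m (m-1)" "m+1 \<in> ZD m (m-1)" using m by (auto simp: ZD_def)
      then have "X 1 1 = 0" "X (m+1) (m+1) = 0" using Xz by blast+
      then show ?thesis using A 1 m by (simp add: Emat_def cvec_def)
    next
      case 2
      have "m-1 \<in> ZD m (m-1)" "2*m-1 \<in> ZD m (m-1)" using m by (auto simp: ZD_def)
      then have "X (m-1) (2*m+1) = 0" "X (2*m+1) (m-1) = 0" "X (2*m-1) (2*m+1) = 0" "X (2*m+1) (2*m-1) = 0"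
        using Xz by blast+
      then show ?thesis using A 2 m al by (simp add: Emat_def cvec_def)
    next
      case 3
      have "j \<in> ZD m (m-1)" "m+j \<in> ZD m (m-1)" "j-1 \<in> ZD m (m-1)" "m+j-1 \<in> ZD m (m-1)"
        using m j 3 by (auto simp: ZD_def)
      then have "X j j = 0" "X (m+j) (m+j) = 0" "X (j-1) (2*m+1) = 0" "X (2*m+1) (j-1) = 0"
         "X (m+j-1) (2*m+1) = 0" "X (2*m+1) (m+j-1) = 0"
        using Xz by blast+
      then show ?thesis using A 3 m j by (simp add: Emat_def cvec_def)
    qed
  qed
  then show ?thesis using sy unfolding H_D_def by auto
qed


lemma Gset_psd: "Gset n Z \<subseteq> psd n" unfolding Gset_def by auto

lemma face_mid:
  assumes "is_face F K" "P \<in> K" "Q \<in> K" "(\<lambda>a b. 1/2 * (P a b + Q a b)) \<in> F"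
  shows "P \<in> F" "Q \<in> F"
  using assms unfolding is_face_def by blast+

lemma face_contains:
  assumes F: "is_face F (psd n)" and X: "X \<in> psd n" and R: "R \<in> psd n"
    and X0: "(\<lambda>a b. X a b + R a b) \<in> F"
  shows "X \<in> F"
proof -
  let ?P = "\<lambda>a b. 2 * X a b"
  let ?Q = "\<lambda>a b. 2 * R a b"
  have P: "?P \<in> psd n" using psd_scale[OF X] by simp
  have Q: "?Q \<in> psd n" using psd_scale[OF R] by simp
  have "(\<lambda>a b. 1/2 * (?P a b + ?Q a b)) = (\<lambda>a b. X a b + R a b)" by (simp add: algebra_simps)
  then have PF: "?P \<in> F" using face_mid(1)[OF F P Q] X0 by simp
  let ?P2 = "\<lambda>a b. 2 * ?P a b"
  let ?Z = "\<lambda>a b. 0::real"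
  have P2: "?P2 \<in> psd n" using psd_scale[OF X, of 4] by simp
  have Z: "?Z \<in> psd n" using psd_scale[OF X, of 0] by simp
  have "(\<lambda>a b. 1/2 * (?P2 a b + ?Z a b)) = ?P" by simp
  then have ZF: "?Z \<in> F" using face_mid(2)[OF F P2 Z] PF by simp
  have "mconvex F" using F unfolding is_face_def by blast
  then have conv: "\<forall>X\<in>F. \<forall>Y\<in>F. \<forall>t::real. 0 \<le> t \<and> t \<le> 1 \<longrightarrow> (\<lambda>a b. t * X a b + (1 - t) * Y a b) \<in> F"
    unfolding mconvex_def by blast
  have "(\<lambda>a b. (1/2) * ?P a b + (1 - 1/2) * ?Z a b) \<in> F"
    by (rule conv[rule_format, OF PF ZF]) auto
  moreover have "(\<lambda>a b. (1/2::real) * ?P a b + (1 - 1/2) * ?Z a b) = X" by simp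
  ultimately show ?thesis by simp
qed

lemma minconeD:
  assumes m: "2 \<le> m"
  shows "minimal_cone (H_D m) (psd (2*m+1)) = Gset (2*m+1) (ZD m (m-1))"
proof (rule minimal_cone_eq)
  show "is_face (Gset (2*m+1) (ZD m (m-1))) (psd (2*m+1))" by (rule Gset_face)
  have "H_D m \<inter> psd (2*m+1) \<subseteq> fr_faces (2*m+1) (psd (2*m+1)) (Amat m) (m-1)"
    by (rule H_sub_faces) (use validD[OF m] in blast)
  then show "H_D m \<inter> psd (2*m+1) \<subseteq> Gset (2*m+1) (ZD m (m-1))" using upperD[OF m, of "m-1"] by simp
  fix F assume F: "is_face F (psd (2*m+1))" and sub: "H_D m \<inter> psd (2*m+1) \<subseteq> F"
  show "Gset (2*m+1) (ZD m (m-1)) \<subseteq> F"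
  proof
    fix X assume X: "X \<in> Gset (2*m+1) (ZD m (m-1))"
    then have Xp: "X \<in> psd (2*m+1)" unfolding Gset_def by auto
    define d where "d = 1 - X m m + X (2*m) (2*m)"
    define al where "al = max d 0"
    define be where "be = max (- d) 0"
    have albe: "al - be = 1 - X m m + X (2*m) (2*m)" unfolding al_def be_def d_def by auto
    let ?R = "\<lambda>a b. al * Emat m m a b + be * Emat (2*m) (2*m) a b"
    have R: "?R \<in> psd (2*m+1)"
      by (rule psd_lin) (use m Emat_diag_psd in \<open>auto simp: al_def be_def\<close>)
    have "(\<lambda>a b. X a b + ?R a b) \<in> H_D m" by (rule X0_in_HD[OF m X albe])
    moreover have "(\<lambda>a b. X a b + ?R a b) \<in> psd (2*m+1)" using psd_add[OF Xp R] by simp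
    ultimately have "(\<lambda>a b. X a b + ?R a b) \<in> F" using sub by blast
    then show "X \<in> F" by (rule face_contains[OF F Xp R])
  qed
qed


lemma lowerD_faces:
  assumes m: "2 \<le> m"
    and v: "\<forall>i\<in>{1..k}. y i \<in> dual_cone (2*m+1) (fr_faces (2*m+1) (psd (2*m+1)) y (i - 1)) \<inter> orth (2*m+1) (H_D m)"
    and k: "k \<le> m - 2"
  shows "j \<le> k \<Longrightarrow> Gset (2*m+1) (ZD m j) \<subseteq> fr_faces (2*m+1) (psd (2*m+1)) y j"
proof (induction j)
  case 0 then show ?case using Gset_psd by simp
next
  case (Suc j)
  let ?N = "2*m+1"
  have IH: "Gset ?N (ZD m j) \<subseteq> fr_faces ?N (psd ?N) y j" using Suc by simp
  have yv: "y (Suc j) \<in> dual_cone ?N (fr_faces ?N (psd ?N) y j) \<inter> orth ?N (H_D m)"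
    using v[rule_format, of "Suc j"] Suc.prems by simp
  have ys: "y (Suc j) \<in> symn ?N" using yv unfolding dual_cone_def by auto
  have yo: "y (Suc j) \<in> orth ?N (H_D m)" using yv by auto
  have pos: "\<forall>X\<in>Gset ?N (ZD m j). 0 \<le> mdot ?N (y (Suc j)) X"
    using yv IH unfolding dual_cone_def by auto
  have step: "\<forall>X\<in>Gset ?N (ZD m (Suc j)). mdot ?N (y (Suc j)) X = 0"
  proof (rule lower_step[OF ys pos])
    show "ZD m j \<subseteq> ZD m (Suc j)" unfolding ZD_def by auto
    show "?N \<notin> ZD m (Suc j)" using Suc.prems k unfolding ZD_def by auto
    show "1 \<le> ?N" by simp
    show "y (Suc j) ?N ?N = 0" by (rule orthD(1)[OF m yo])
    show "\<forall>a\<in>{1..?N}. a \<notin> ZD m (Suc j) \<longrightarrow> a \<noteq> ?N \<longrightarrow>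
       (\<exists>b\<in>{1..?N}. b \<notin> ZD m j \<and> (y (Suc j) a a = y (Suc j) b ?N \<or> y (Suc j) a a = - y (Suc j) b ?N))"
    proof (intro ballI impI)
      fix a assume a: "a \<in> {1..?N}" "a \<notin> ZD m (Suc j)" "a \<noteq> ?N"
      show "\<exists>b\<in>{1..?N}. b \<notin> ZD m j \<and> (y (Suc j) a a = y (Suc j) b ?N \<or> y (Suc j) a a = - y (Suc j) b ?N)"
      proof (cases "a \<le> m")
        case True
        then have "2 \<le> a" "j + 2 \<le> a" using a unfolding ZD_def by auto
        then have "y (Suc j) a a = y (Suc j) (a-1) ?N" using orthD(2)[OF m yo, of a] True by simp
        moreover have "a - 1 \<in> {1..?N}" "a - 1 \<notin> ZD m j" using \<open>j + 2 \<le> a\<close> True unfolding ZD_def by auto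
        ultimately show ?thesis by blast
      next
        case False
        then have a2: "m + j + 2 \<le> a" "a \<le> 2*m" using a unfolding ZD_def by auto
        have b: "a - 1 \<in> {1..?N}" "a - 1 \<notin> ZD m j" using a2 k m unfolding ZD_def by auto
        show ?thesis
        proof (cases "a = 2*m")
          case True
          then have "y (Suc j) a a = - y (Suc j) (a-1) ?N" using orthD(4)[OF m yo] by simp
          then show ?thesis using b by blast
        next
          case False
          define i where "i = a - m"
          have i: "2 \<le> i" "i \<le> m - 1" "a = m + i" using a2 False unfolding i_def by auto
          then have "y (Suc j) a a = y (Suc j) (a-1) ?N" using orthD(3)[OF m yo i(1,2)] by simp
          then show ?thesis using b by blast
        qed
      qed
    qed
  qed
  show ?case
  proof
    fix X assume X: "X \<in> Gset ?N (ZD m (Suc j))"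
    then have "X \<in> Gset ?N (ZD m j)" unfolding Gset_def ZD_Suc by auto
    then have "X \<in> fr_faces ?N (psd ?N) y j" using IH by auto
    moreover have "mdot ?N (y (Suc j)) X = 0" using step X by auto
    ultimately show "X \<in> fr_faces ?N (psd ?N) y (Suc j)" by simp
  qed
qed

lemma lowerD:
  assumes m: "2 \<le> m" and k: "k \<le> m - 2"
  shows "\<not> fr_sequence (2*m+1) (H_D m) (psd (2*m+1)) k"
proof
  assume "fr_sequence (2*m+1) (H_D m) (psd (2*m+1)) k"
  then obtain y where v: "\<forall>i\<in>{1..k}. y i \<in> dual_cone (2*m+1) (fr_faces (2*m+1) (psd (2*m+1)) y (i - 1)) \<inter> orth (2*m+1) (H_D m)"
    and eq: "fr_faces (2*m+1) (psd (2*m+1)) y k = minimal_cone (H_D m) (psd (2*m+1))"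
    unfolding fr_sequence_def by blast
  have "Gset (2*m+1) (ZD m k) \<subseteq> Gset (2*m+1) (ZD m (m-1))"
    using lowerD_faces[OF m v k order_refl] eq minconeD[OF m] by simp
  moreover have "Emat (k+1) (k+1) \<in> Gset (2*m+1) (ZD m k)"
    unfolding Gset_def using Emat_diag_psd[of "k+1" "2*m+1"] k m by (auto simp: ZD_def Emat_def)
  ultimately have "Emat (k+1) (k+1) \<in> Gset (2*m+1) (ZD m (m-1))" by blast
  moreover have "k+1 \<in> ZD m (m-1)" using k m unfolding ZD_def by auto
  ultimately show False unfolding Gset_def Emat_def by auto
qed

lemma thmD:
  assumes m: "2 \<le> m"
  shows "sing_deg (2*m+1) (H_D m) (psd (2*m+1)) = m - 1"
proof (rule sing_deg_eq)
  show "fr_sequence (2*m+1) (H_D m) (psd (2*m+1)) (m-1)"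
    unfolding fr_sequence_def
    by (rule exI[of _ "Amat m"]) (use validD[OF m] upperD[OF m, of "m-1"] minconeD[OF m] in auto)
  fix k assume "k < m - 1"
  then show "\<not> fr_sequence (2*m+1) (H_D m) (psd (2*m+1)) k" using lowerD[OF m] by simp
qed


definition ZH :: "nat \<Rightarrow> nat \<Rightarrow> nat set" where
  "ZH m k = {a. 0 < k \<and> 1 \<le> a \<and> a \<le> m + k}"

definition yH :: "nat \<Rightarrow> nat \<Rightarrow> mat" where
  "yH m i = (if i = 1 then Bmat m else if i = m then (\<lambda>a b. - Amat m m a b) else Amat m i)"

lemma ZH_0: "ZH m 0 = {}" unfolding ZH_def by auto
lemma ZH_1: "ZH m (Suc 0) = {1..m+1}" unfolding ZH_def by auto
lemma ZH_Suc: "0 < k \<Longrightarrow> ZH m (Suc k) = ZH m k \<union> {m + Suc k}" unfolding ZH_def by auto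

lemma Bmat_symn: "Bmat m \<in> symn (2*m+1)"
  unfolding symn_def Bmat_def by auto

lemma yH_symn: assumes m: "2 \<le> m" and i: "1 \<le> i" "i \<le> m" shows "yH m i \<in> symn (2*m+1)"
proof -
  have "Amat m m \<in> symn (2*m+1)" "Amat m i \<in> symn (2*m+1)" using Amat_symn m i by auto
  then show ?thesis unfolding yH_def using Bmat_symn by (auto simp: symn_def)
qed

lemma AH_on_G:
  assumes m: "2 \<le> m" and j: "2 \<le> j" "j \<le> m" and X: "X \<in> Gset (2*m+1) (ZH m (j-1))"
  shows "mdot (2*m+1) (yH m j) X = X (m+j) (m+j)"
proof -
  have Xp: "X \<in> psd (2*m+1)" and Xd: "\<forall>a\<in>ZH m (j-1). X a a = 0" using X unfolding Gset_def by auto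
  have Xz: "X p q = 0 \<and> X q p = 0" if "p \<in> ZH m (j-1)" for p q
  proof -
    have "X p p = 0" using Xd that by blast
    from psd_row_zero[OF Xp this] show ?thesis by blast
  qed
  have A: "mdot (2*m+1) (Amat m j) X =
    (if j = 1 then X 1 1 + X (m+1) (m+1)
     else if j = m then X m m - X (2*m) (2*m) + (X (m-1) (2*m+1) + X (2*m+1) (m-1)) + (X (2*m-1) (2*m+1) + X (2*m+1) (2*m-1))
     else X j j + X (m+j) (m+j) + (X (j-1) (2*m+1) + X (2*m+1) (j-1)) + (X (m+j-1) (2*m+1) + X (2*m+1) (m+j-1)))"
    by (rule mdot_Amat) (use m j in auto)
  show ?thesis
  proof (cases "j = m")
    case True
    have "m \<in> ZH m (j-1)" "m-1 \<in> ZH m (j-1)" "2*m-1 \<in> ZH m (j-1)" using m j True by (auto simp: ZH_def)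
    then have "X m m = 0" "X (m-1) (2*m+1) = 0" "X (2*m+1) (m-1) = 0" "X (2*m-1) (2*m+1) = 0" "X (2*m+1) (2*m-1) = 0"
      using Xz by blast+
    moreover have "mdot (2*m+1) (yH m j) X = - mdot (2*m+1) (Amat m m) X"
      using True m by (simp add: yH_def mdot_neg_left)
    ultimately show ?thesis using A True m by (simp add: mult_2)
  next
    case False
    have "j \<in> ZH m (j-1)" "j-1 \<in> ZH m (j-1)" "m+j-1 \<in> ZH m (j-1)" using m j by (auto simp: ZH_def)
    then have "X j j = 0" "X (j-1) (2*m+1) = 0" "X (2*m+1) (j-1) = 0" "X (m+j-1) (2*m+1) = 0" "X (2*m+1) (m+j-1) = 0"
      using Xz by blast+
    moreover have "mdot (2*m+1) (yH m j) X = mdot (2*m+1) (Amat m j) X"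
      using False j by (simp add: yH_def)
    ultimately show ?thesis using A False j by simp
  qed
qed

lemma upperH:
  assumes m: "2 \<le> m"
  shows "k \<le> m \<Longrightarrow> fr_faces (2*m+1) (psd (2*m+1)) (yH m) k = Gset (2*m+1) (ZH m k)"
proof (induction k)
  case 0 then show ?case by (simp add: ZH_0 Gset_def)
next
  case (Suc k)
  then have IH: "fr_faces (2*m+1) (psd (2*m+1)) (yH m) k = Gset (2*m+1) (ZH m k)" by simp
  have "Gset (2*m+1) (ZH m k) \<inter> {X. mdot (2*m+1) (yH m (Suc k)) X = 0} = Gset (2*m+1) (ZH m (Suc k))"
  proof (cases "k = 0")
    case True
    have yB: "yH m (Suc k) = Bmat m" using True by (simp add: yH_def)
    have B: "mdot (2*m+1) (yH m (Suc k)) X = (\<Sum>a\<in>{1..m+1}. X a a)" for X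
      by (simp only: yB mdot_Bmat)
    show ?thesis
    proof (intro set_eqI iffI)
      fix X assume X: "X \<in> Gset (2*m+1) (ZH m k) \<inter> {X. mdot (2*m+1) (yH m (Suc k)) X = 0}"
      then have Xp: "X \<in> psd (2*m+1)" unfolding Gset_def by auto
      have "(\<Sum>a\<in>{1..m+1}. X a a) = 0" using X B by auto
      then have "\<forall>a\<in>{1..m+1}. X a a = 0" using psd_diag[OF Xp] by (subst (asm) sum_nonneg_eq_0_iff) auto
      then show "X \<in> Gset (2*m+1) (ZH m (Suc k))" using Xp True unfolding Gset_def by (auto simp: ZH_1)
    next
      fix X assume X: "X \<in> Gset (2*m+1) (ZH m (Suc k))"
      then have "\<forall>a\<in>{1..m+1}. X a a = 0" and Xp: "X \<in> psd (2*m+1)" using True unfolding Gset_def by (auto simp: ZH_1)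
      then have "(\<Sum>a\<in>{1..m+1}. X a a) = 0" by simp
      then show "X \<in> Gset (2*m+1) (ZH m k) \<inter> {X. mdot (2*m+1) (yH m (Suc k)) X = 0}"
        using B Xp True unfolding Gset_def by (auto simp: ZH_0)
    qed
  next
    case False
    show ?thesis
    proof (intro set_eqI iffI)
      fix X assume X: "X \<in> Gset (2*m+1) (ZH m k) \<inter> {X. mdot (2*m+1) (yH m (Suc k)) X = 0}"
      then have XG: "X \<in> Gset (2*m+1) (ZH m k)" by auto
      have "mdot (2*m+1) (yH m (Suc k)) X = X (m + Suc k) (m + Suc k)"
        by (rule AH_on_G) (use m Suc.prems XG False in auto)
      then have "X (m + Suc k) (m + Suc k) = 0" using X by auto
      then show "X \<in> Gset (2*m+1) (ZH m (Suc k))" using XG False unfolding Gset_def by (auto simp: ZH_Suc)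
    next
      fix X assume X: "X \<in> Gset (2*m+1) (ZH m (Suc k))"
      then have XG: "X \<in> Gset (2*m+1) (ZH m k)" using False unfolding Gset_def by (auto simp: ZH_Suc)
      have "mdot (2*m+1) (yH m (Suc k)) X = X (m + Suc k) (m + Suc k)"
        by (rule AH_on_G) (use m Suc.prems XG False in auto)
      moreover have "X (m + Suc k) (m + Suc k) = 0" using X False unfolding Gset_def by (auto simp: ZH_Suc)
      ultimately show "X \<in> Gset (2*m+1) (ZH m k) \<inter> {X. mdot (2*m+1) (yH m (Suc k)) X = 0}" using XG by auto
    qed
  qed
  then show ?case using IH by simp
qed


lemma validH:
  assumes m: "2 \<le> m" and i: "i \<in> {1..m}"
  shows "yH m i \<in> dual_cone (2*m+1) (fr_faces (2*m+1) (psd (2*m+1)) (yH m) (i-1)) \<inter> orth (2*m+1) (H_HD m)"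
proof -
  have sy: "yH m i \<in> symn (2*m+1)" by (rule yH_symn) (use m i in auto)
  have F: "fr_faces (2*m+1) (psd (2*m+1)) (yH m) (i-1) = Gset (2*m+1) (ZH m (i-1))"
    by (rule upperH) (use m i in auto)
  have "0 \<le> mdot (2*m+1) (yH m i) X" if X: "X \<in> Gset (2*m+1) (ZH m (i-1))" for X
  proof (cases "i = 1")
    case True
    have Xp: "X \<in> psd (2*m+1)" using X unfolding Gset_def by auto
    have yB: "yH m i = Bmat m" using True by (simp add: yH_def)
    have "mdot (2*m+1) (yH m i) X = (\<Sum>a\<in>{1..m+1}. X a a)" by (simp only: yB mdot_Bmat)
    also have "\<dots> \<ge> 0" using psd_diag[OF Xp] by (intro sum_nonneg) auto
    finally show ?thesis .
  next
    case False
    have "mdot (2*m+1) (yH m i) X = X (m+i) (m+i)"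
      by (rule AH_on_G) (use m i X False in auto)
    moreover have "0 \<le> X (m+i) (m+i)" using X psd_diag unfolding Gset_def by auto
    ultimately show ?thesis by simp
  qed
  moreover have "mdot (2*m+1) (yH m i) X = 0" if X: "X \<in> H_HD m" for X
  proof -
    have B: "mdot (2*m+1) (Bmat m) X = 0" and A: "\<forall>j\<in>{1..m}. mdot (2*m+1) (Amat m j) X = 0"
      using X unfolding H_HD_def by auto
    show ?thesis
    proof (cases "i = 1")
      case True then show ?thesis using B by (simp add: yH_def)
    next
      case False
      show ?thesis
      proof (cases "i = m")
        case True then show ?thesis using A m False by (simp add: yH_def mdot_neg_left)
      next
        case F2: False then show ?thesis using A i False by (simp add: yH_def)
      qed
    qed
  qed
  ultimately show ?thesis using sy F unfolding dual_cone_def orth_def by auto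
qed

lemma MH_in_H:
  assumes m: "2 \<le> m" and X: "X \<in> Gset (2*m+1) (ZH m m)"
  shows "X \<in> H_HD m"
proof -
  have Xp: "X \<in> psd (2*m+1)" and Xd: "\<forall>a\<in>ZH m m. X a a = 0" using X unfolding Gset_def by auto
  have Xz: "X p q = 0 \<and> X q p = 0" if "p \<in> ZH m m" for p q
  proof -
    have "X p p = 0" using Xd that by blast
    from psd_row_zero[OF Xp this] show ?thesis by blast
  qed
  have sy: "X \<in> symn (2*m+1)" using Xp unfolding psd_def by auto
  have B: "mdot (2*m+1) (Bmat m) X = 0"
    unfolding mdot_Bmat using Xz m by (intro sum.neutral) (auto simp: ZH_def)
  have "mdot (2*m+1) (Amat m j) X = 0" if j: "j \<in> {1..m}" for j
  proof -
    have A: "mdot (2*m+1) (Amat m j) X =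
      (if j = 1 then X 1 1 + X (m+1) (m+1)
       else if j = m then X m m - X (2*m) (2*m) + (X (m-1) (2*m+1) + X (2*m+1) (m-1)) + (X (2*m-1) (2*m+1) + X (2*m+1) (2*m-1))
       else X j j + X (m+j) (m+j) + (X (j-1) (2*m+1) + X (2*m+1) (j-1)) + (X (m+j-1) (2*m+1) + X (2*m+1) (m+j-1)))"
      by (rule mdot_Amat) (use m j in auto)
    consider "j = 1" | "j = m" | "j \<noteq> 1 \<and> j \<noteq> m" by blast
    then show ?thesis
    proof cases
      case 1
      have "1 \<in> ZH m m" "m+1 \<in> ZH m m" using m by (auto simp: ZH_def)
      then have "X 1 1 = 0" "X (m+1) (m+1) = 0" using Xz by blast+
      then show ?thesis using A 1 by simp
    next
      case 2
      have "m \<in> ZH m m" "2*m \<in> ZH m m" "m-1 \<in> ZH m m" "2*m-1 \<in> ZH m m" using m by (auto simp: ZH_def)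
      then have "X m m = 0" "X (2*m) (2*m) = 0" "X (m-1) (2*m+1) = 0" "X (2*m+1) (m-1) = 0" "X (2*m-1) (2*m+1) = 0" "X (2*m+1) (2*m-1) = 0"
        using Xz by blast+
      then show ?thesis using A 2 m by simp
    next
      case 3
      have "j \<in> ZH m m" "m+j \<in> ZH m m" "j-1 \<in> ZH m m" "m+j-1 \<in> ZH m m"
        using m j 3 by (auto simp: ZH_def)
      then have "X j j = 0" "X (m+j) (m+j) = 0" "X (j-1) (2*m+1) = 0" "X (2*m+1) (j-1) = 0"
         "X (m+j-1) (2*m+1) = 0" "X (2*m+1) (m+j-1) = 0"
        using Xz by blast+
      then show ?thesis using A 3 by simp
    qed
  qed
  then show ?thesis using sy B unfolding H_HD_def by auto
qed

lemma minconeH: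
  assumes m: "2 \<le> m"
  shows "minimal_cone (H_HD m) (psd (2*m+1)) = Gset (2*m+1) (ZH m m)"
proof (rule minimal_cone_eq)
  show "is_face (Gset (2*m+1) (ZH m m)) (psd (2*m+1))" by (rule Gset_face)
  have "H_HD m \<inter> psd (2*m+1) \<subseteq> fr_faces (2*m+1) (psd (2*m+1)) (yH m) m"
    by (rule H_sub_faces) (use validH[OF m] in blast)
  then show "H_HD m \<inter> psd (2*m+1) \<subseteq> Gset (2*m+1) (ZH m m)" using upperH[OF m, of m] by simp
  fix F assume F: "is_face F (psd (2*m+1))" and sub: "H_HD m \<inter> psd (2*m+1) \<subseteq> F"
  show "Gset (2*m+1) (ZH m m) \<subseteq> F"
    using MH_in_H[OF m] sub Gset_psd by blast
qed




lemma lowerH_faces: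
  assumes m: "2 \<le> m"
    and v: "\<forall>i\<in>{1..k}. y i \<in> dual_cone (2*m+1) (fr_faces (2*m+1) (psd (2*m+1)) y (i - 1)) \<inter> orth (2*m+1) (H_HD m)"
    and k: "k \<le> m - 1"
  shows "j \<le> k \<Longrightarrow> Gset (2*m+1) (ZH m j) \<subseteq> fr_faces (2*m+1) (psd (2*m+1)) y j"
proof (induction j)
  case 0 then show ?case using Gset_psd by simp
next
  case (Suc j)
  let ?N = "2*m+1"
  have IH: "Gset ?N (ZH m j) \<subseteq> fr_faces ?N (psd ?N) y j" using Suc by simp
  have yv: "y (Suc j) \<in> dual_cone ?N (fr_faces ?N (psd ?N) y j) \<inter> orth ?N (H_HD m)"
    using v[rule_format, of "Suc j"] Suc.prems by simp
  have ys: "y (Suc j) \<in> symn ?N" using yv unfolding dual_cone_def by auto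
  have yo: "y (Suc j) \<in> orth ?N (H_HD m)" using yv by auto
  have pos: "\<forall>X\<in>Gset ?N (ZH m j). 0 \<le> mdot ?N (y (Suc j)) X"
    using yv IH unfolding dual_cone_def by auto
  have step: "\<forall>X\<in>Gset ?N (ZH m (Suc j)). mdot ?N (y (Suc j)) X = 0"
  proof (rule lower_step[OF ys pos])
    show "ZH m j \<subseteq> ZH m (Suc j)" unfolding ZH_def by auto
    show "?N \<notin> ZH m (Suc j)" using Suc.prems k unfolding ZH_def by auto
    show "1 \<le> ?N" by simp
    show "y (Suc j) ?N ?N = 0" by (rule orthH(1)[OF m yo])
    show "\<forall>a\<in>{1..?N}. a \<notin> ZH m (Suc j) \<longrightarrow> a \<noteq> ?N \<longrightarrow>
       (\<exists>b\<in>{1..?N}. b \<notin> ZH m j \<and> (y (Suc j) a a = y (Suc j) b ?N \<or> y (Suc j) a a = - y (Suc j) b ?N))"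
    proof (intro ballI impI)
      fix a assume a: "a \<in> {1..?N}" "a \<notin> ZH m (Suc j)" "a \<noteq> ?N"
      then have a2: "m + j + 2 \<le> a" "a \<le> 2*m" unfolding ZH_def by auto
      have b: "a - 1 \<in> {1..?N}" "a - 1 \<notin> ZH m j" using a2 k m unfolding ZH_def by auto
      show "\<exists>b\<in>{1..?N}. b \<notin> ZH m j \<and> (y (Suc j) a a = y (Suc j) b ?N \<or> y (Suc j) a a = - y (Suc j) b ?N)"
      proof (cases "a = 2*m")
        case True
        then have "y (Suc j) a a = - y (Suc j) (a-1) ?N" using orthH(3)[OF m yo] by simp
        then show ?thesis using b by blast
      next
        case False
        define i where "i = a - m"
        have i: "2 \<le> i" "i \<le> m - 1" "a = m + i" using a2 False unfolding i_def by auto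
        then have "y (Suc j) a a = y (Suc j) (a-1) ?N" using orthH(2)[OF m yo i(1,2)] by simp
        then show ?thesis using b by blast
      qed
    qed
  qed
  show ?case
  proof
    fix X assume X: "X \<in> Gset ?N (ZH m (Suc j))"
    then have "X \<in> Gset ?N (ZH m j)" unfolding Gset_def ZH_def by auto
    then have "X \<in> fr_faces ?N (psd ?N) y j" using IH by auto
    moreover have "mdot ?N (y (Suc j)) X = 0" using step X by auto
    ultimately show "X \<in> fr_faces ?N (psd ?N) y (Suc j)" by simp
  qed
qed

lemma lowerH:
  assumes m: "2 \<le> m" and k: "k \<le> m - 1"
  shows "\<not> fr_sequence (2*m+1) (H_HD m) (psd (2*m+1)) k"
proof
  assume "fr_sequence (2*m+1) (H_HD m) (psd (2*m+1)) k"
  then obtain y where v: "\<forall>i\<in>{1..k}. y i \<in> dual_cone (2*m+1) (fr_faces (2*m+1) (psd (2*m+1)) y (i - 1)) \<inter> orth (2*m+1) (H_HD m)"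
    and eq: "fr_faces (2*m+1) (psd (2*m+1)) y k = minimal_cone (H_HD m) (psd (2*m+1))"
    unfolding fr_sequence_def by blast
  have "Gset (2*m+1) (ZH m k) \<subseteq> Gset (2*m+1) (ZH m m)"
    using lowerH_faces[OF m v k order_refl] eq minconeH[OF m] by simp
  moreover have "Emat (2*m) (2*m) \<in> Gset (2*m+1) (ZH m k)"
    unfolding Gset_def using Emat_diag_psd[of "2*m" "2*m+1"] k m by (auto simp: ZH_def Emat_def)
  ultimately have "Emat (2*m) (2*m) \<in> Gset (2*m+1) (ZH m m)" by blast
  moreover have "2*m \<in> ZH m m" using m unfolding ZH_def by auto
  ultimately show False unfolding Gset_def Emat_def by auto
qed

lemma thmH:
  assumes m: "2 \<le> m"
  shows "sing_deg (2*m+1) (H_HD m) (psd (2*m+1)) = m"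
proof (rule sing_deg_eq)
  show "fr_sequence (2*m+1) (H_HD m) (psd (2*m+1)) m"
    unfolding fr_sequence_def
    by (rule exI[of _ "yH m"]) (use validH[OF m] upperH[OF m, of m] minconeH[OF m] in auto)
  fix k assume "k < m"
  then show "\<not> fr_sequence (2*m+1) (H_HD m) (psd (2*m+1)) k" using lowerH[OF m] by simp
qed

theorem theorem3:
  fixes m :: nat
  assumes "m \<ge> 2"
  shows "sing_deg (2*m+1) (H_D m) (psd (2*m+1)) = m - 1
       \<and> sing_deg (2*m+1) (H_HD m) (psd (2*m+1)) = m"
  using thmD[OF assms] thmH[OF assms] by simp


end
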